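(* For the linear classification problem (estimating the margin $\max_{\|x\|\le1}\min_iA_ix$) and for the minimum enclosing ball problem (estimating $\min_x\max_i\|x-A_i\|^2$), there is no Las Vegas algorithm that reads an expected $o(M)$ entries of its input matrix and solves the problem to within a one-sided additive error of at most $1/2$. This holds even if $\|A_i\|=1$ for all rows $A_i$.
   Context: The input is an $n\times d$ real matrix $A$ with $M$ nonzero entries and rows of Euclidean norm at most $1$. A Las Vegas algorithm is a randomized algorithm whose output is always correct (never errs); its cost is the expected number of entries read. *)

theory Defs
  imports "HOL-Probability.Probability"
begin

text \<open>An input instance is a triple (n, d, A): an n x d real matrix given by its entry
  function A, with rows indexed by i < n and columns by j < d (entries outside are 0).\<close>
type_synonym input = "nat \<times> nat \<times> (nat \<Rightarrow> nat \<Rightarrow> real)"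

definition row_norm :: "nat \<Rightarrow> (nat \<Rightarrow> nat \<Rightarrow> real) \<Rightarrow> nat \<Rightarrow> real" where
  "row_norm d A i = sqrt (\<Sum>j<d. (A i j)^2)"

definition valid_input :: "input \<Rightarrow> bool" where
  "valid_input inp = (case inp of (n, d, A) \<Rightarrow>
      n \<ge> 1 \<and> (\<forall>i j. (n \<le> i \<or> d \<le> j) \<longrightarrow> A i j = 0) \<and> (\<forall>i<n. row_norm d A i = 1))"

definition nnz :: "input \<Rightarrow> nat" where
  "nnz inp = (case inp of (n, d, A) \<Rightarrow> card {(i, j). i < n \<and> j < d \<and> A i j \<noteq> 0})"

definition margin :: "input \<Rightarrow> real" where
  "margin inp = (case inp of (n, d, A) \<Rightarrow>
     Sup {Min ((\<lambda>i. \<Sum>j<d. A i j * x j) ` {..<n}) | x :: nat \<Rightarrow> real. (\<Sum>j<d. (x j)^2) \<le> 1})"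

definition meb :: "input \<Rightarrow> real" where
  "meb inp = (case inp of (n, d, A) \<Rightarrow>
     Inf {Max ((\<lambda>i. \<Sum>j<d. (x j - A i j)^2) ` {..<n}) | x :: nat \<Rightarrow> real. True})"

text \<open>A randomized entry-query algorithm: random seed w drawn from probability space W;
  on input inp it outputs out w inp after reading the set qry w inp of entries.\<close>
definition query_algorithm ::
  "'w measure \<Rightarrow> ('w \<Rightarrow> input \<Rightarrow> real) \<Rightarrow> ('w \<Rightarrow> input \<Rightarrow> (nat \<times> nat) set) \<Rightarrow> bool" where
  "query_algorithm W out qry =
     (prob_space W \<and>
      (\<forall>n d A. valid_input (n, d, A) \<longrightarrow>
         (\<lambda>w. real (card (qry w (n, d, A)))) \<in> borel_measurable W) \<and>
      (\<forall>w\<in>space W. \<forall>n d A. valid_input (n, d, A) \<longrightarrow> qry w (n, d, A) \<subseteq> {..<n} \<times> {..<d}) \<and>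
      (\<forall>w\<in>space W. \<forall>n d A B. valid_input (n, d, A) \<longrightarrow> valid_input (n, d, B) \<longrightarrow>
         (\<forall>(i, j)\<in>qry w (n, d, A). A i j = B i j) \<longrightarrow>
         out w (n, d, B) = out w (n, d, A) \<and> qry w (n, d, B) = qry w (n, d, A)))"

definition las_vegas_one_sided :: "'w measure \<Rightarrow> ('w \<Rightarrow> input \<Rightarrow> real) \<Rightarrow> (input \<Rightarrow> real) \<Rightarrow> bool" where
  "las_vegas_one_sided W out f =
     ((\<forall>w\<in>space W. \<forall>inp. valid_input inp \<longrightarrow> f inp - 1/2 \<le> out w inp \<and> out w inp \<le> f inp) \<or>
      (\<forall>w\<in>space W. \<forall>inp. valid_input inp \<longrightarrow> f inp \<le> out w inp \<and> out w inp \<le> f inp + 1/2))"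

definition expected_cost :: "'w measure \<Rightarrow> ('w \<Rightarrow> input \<Rightarrow> (nat \<times> nat) set) \<Rightarrow> input \<Rightarrow> ennreal" where
  "expected_cost W qry inp = (\<integral>\<^sup>+ w. ennreal (real (card (qry w inp))) \<partial>W)"

definition sublinear_cost :: "'w measure \<Rightarrow> ('w \<Rightarrow> input \<Rightarrow> (nat \<times> nat) set) \<Rightarrow> bool" where
  "sublinear_cost W qry =
     (\<forall>\<epsilon>>0. \<exists>M0. \<forall>inp. valid_input inp \<longrightarrow> nnz inp \<ge> M0 \<longrightarrow>
        expected_cost W qry inp \<le> ennreal (\<epsilon> * real (nnz inp)))"

end

theory Submission
  imports Defs
begin

definition ones :: "nat \<Rightarrow> nat \<Rightarrow> nat \<Rightarrow> real" where
  "ones n = (\<lambda>i j. if i < n \<and> j = 0 then 1 else 0)"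
definition flp :: "nat \<Rightarrow> nat \<Rightarrow> nat \<Rightarrow> nat \<Rightarrow> real" where
  "flp n k = (\<lambda>i j. if i < n \<and> j = 0 then (if i = k then -1 else 1) else 0)"

lemma valid_ones: "n \<ge> 1 \<Longrightarrow> valid_input (n, 1, ones n)"
  by (auto simp: valid_input_def ones_def row_norm_def)

lemma valid_flp: "n \<ge> 1 \<Longrightarrow> valid_input (n, 1, flp n k)"
  by (auto simp: valid_input_def flp_def row_norm_def)

lemma nnz_ones: "nnz (n, 1, ones n) = n"
proof -
  have "{(i, j). i < n \<and> j < (1::nat) \<and> ones n i j \<noteq> 0} = {..<n} \<times> {0}"
    by (auto simp: ones_def)
  then show ?thesis by (simp add: nnz_def)
qed

lemma margin_ones: assumes "n \<ge> 1" shows "margin (n, 1, ones n) = 1"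
proof -
  have img: "(\<lambda>i. \<Sum>j<1. ones n i j * x j) ` {..<n} = {x 0}" for x :: "nat \<Rightarrow> real"
    using assms by (auto simp: ones_def intro!: image_eqI[of _ _ 0])
  let ?S = "{Min ((\<lambda>i. \<Sum>j<1. ones n i j * x j) ` {..<n}) | x :: nat \<Rightarrow> real. (\<Sum>j<1. (x j)^2) \<le> 1}"
  have S: "?S = {x 0 | x :: nat \<Rightarrow> real. (x 0)^2 \<le> 1}"
    unfolding img by simp
  have "Sup ?S = 1" unfolding S
  proof (rule cSup_eq_maximum)
    show "1 \<in> {x 0 | x :: nat \<Rightarrow> real. (x 0)^2 \<le> 1}" by (intro CollectI exI[of _ "\<lambda>_. 1"]) simp
    fix y assume "y \<in> {x 0 | x :: nat \<Rightarrow> real. (x 0)^2 \<le> 1}"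
    then show "y \<le> 1" by (auto simp: abs_square_le_1 dest: abs_le_D1)
  qed
  then show ?thesis by (simp add: margin_def)
qed

lemma other_idx: assumes "n \<ge> 2" "(k::nat) < n" obtains k' where "k' < n" "k' \<noteq> k"
proof (cases "k = 0")
  case True then show ?thesis using assms that[of 1] by auto
next
  case False then show ?thesis using assms that[of 0] by auto
qed

lemma img_flp: assumes "n \<ge> 2" "k < n"
  shows "(\<lambda>i. \<Sum>j<1. flp n k i j * x j) ` {..<n} = {- x 0, x 0}"
proof -
  obtain k' where k': "k' < n" "k' \<noteq> k" using other_idx assms by blast
  have a: "- x 0 = (\<Sum>j<1. flp n k k j * x j)" and b: "x 0 = (\<Sum>j<1. flp n k k' j * x j)"
    using assms k' by (auto simp: flp_def)
  show ?thesis
  proof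
    show "(\<lambda>i. \<Sum>j<1. flp n k i j * x j) ` {..<n} \<subseteq> {- x 0, x 0}" unfolding flp_def by auto
    show "{- x 0, x 0} \<subseteq> (\<lambda>i. \<Sum>j<1. flp n k i j * x j) ` {..<n}"
      using image_eqI[where f="\<lambda>i. \<Sum>j<1. flp n k i j * x j", OF a, of "{..<n}"]
        image_eqI[where f="\<lambda>i. \<Sum>j<1. flp n k i j * x j", OF b, of "{..<n}"] assms k' by simp
  qed
qed

lemma img_flp2: assumes "n \<ge> 2" "k < n"
  shows "(\<lambda>i. \<Sum>j<1. (x j - flp n k i j)^2) ` {..<n} = {(x 0 + 1)^2, (x 0 - 1)^2}"
proof -
  obtain k' where k': "k' < n" "k' \<noteq> k" using other_idx assms by blast
  have a: "(x 0 + 1)^2 = (\<Sum>j<1. (x j - flp n k k j)^2)" and b: "(x 0 - 1)^2 = (\<Sum>j<1. (x j - flp n k k' j)^2)"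
    using assms k' by (auto simp: flp_def)
  show ?thesis
  proof
    show "(\<lambda>i. \<Sum>j<1. (x j - flp n k i j)^2) ` {..<n} \<subseteq> {(x 0 + 1)^2, (x 0 - 1)^2}" unfolding flp_def by auto
    show "{(x 0 + 1)^2, (x 0 - 1)^2} \<subseteq> (\<lambda>i. \<Sum>j<1. (x j - flp n k i j)^2) ` {..<n}"
      using image_eqI[where f="\<lambda>i. \<Sum>j<1. (x j - flp n k i j)^2", OF a, of "{..<n}"]
        image_eqI[where f="\<lambda>i. \<Sum>j<1. (x j - flp n k i j)^2", OF b, of "{..<n}"] assms k' by simp
  qed
qed

lemma margin_flp: assumes "n \<ge> 2" "k < n" shows "margin (n, 1, flp n k) = 0"
proof -
  let ?S = "{Min ((\<lambda>i. \<Sum>j<1. flp n k i j * x j) ` {..<n}) | x :: nat \<Rightarrow> real. (\<Sum>j<1. (x j)^2) \<le> 1}"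
  have S: "?S = {min (- x 0) (x 0) | x :: nat \<Rightarrow> real. (x 0)^2 \<le> 1}"
    unfolding img_flp[OF assms] by simp
  have "Sup ?S = 0" unfolding S
  proof (rule cSup_eq_maximum)
    show "0 \<in> {min (- x 0) (x 0) | x :: nat \<Rightarrow> real. (x 0)^2 \<le> 1}"
      by (intro CollectI exI[of _ "\<lambda>_. 0"]) simp
    fix y assume "y \<in> {min (- x 0) (x 0) | x :: nat \<Rightarrow> real. (x 0)^2 \<le> 1}"
    then show "y \<le> 0" by auto
  qed
  then show ?thesis by (simp add: margin_def)
qed

lemma meb_ones: assumes "n \<ge> 1" shows "meb (n, 1, ones n) = 0"
proof -
  have img: "(\<lambda>i. \<Sum>j<1. (x j - ones n i j)^2) ` {..<n} = {(x 0 - 1)^2}" for x :: "nat \<Rightarrow> real"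
    using assms by (auto simp: ones_def intro!: image_eqI[of _ _ 0])
  let ?S = "{Max ((\<lambda>i. \<Sum>j<1. (x j - ones n i j)^2) ` {..<n}) | x :: nat \<Rightarrow> real. True}"
  have S: "?S = {(x 0 - 1)^2 | x :: nat \<Rightarrow> real. True}"
    unfolding img by simp
  have "Inf ?S = 0" unfolding S
  proof (rule cInf_eq_minimum)
    show "0 \<in> {(x 0 - 1)^2 | x :: nat \<Rightarrow> real. True}" by (intro CollectI exI[of _ "\<lambda>_. 1"]) simp
    fix y assume "y \<in> {(x 0 - 1)^2 | x :: nat \<Rightarrow> real. True}"
    then show "0 \<le> y" by auto
  qed
  then show ?thesis by (simp add: meb_def)
qed

lemma meb_flp: assumes "n \<ge> 2" "k < n" shows "meb (n, 1, flp n k) = 1"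
proof -
  let ?S = "{Max ((\<lambda>i. \<Sum>j<1. (x j - flp n k i j)^2) ` {..<n}) | x :: nat \<Rightarrow> real. True}"
  have S: "?S = {max ((x 0 + 1)^2) ((x 0 - 1)^2) | x :: nat \<Rightarrow> real. True}"
    unfolding img_flp2[OF assms] by simp
  have "Inf ?S = 1" unfolding S
  proof (rule cInf_eq_minimum)
    show "1 \<in> {max ((x 0 + 1)^2) ((x 0 - 1)^2) | x :: nat \<Rightarrow> real. True}"
      by (intro CollectI exI[of _ "\<lambda>_. 0"]) simp
    fix y assume "y \<in> {max ((x 0 + 1)^2) ((x 0 - 1)^2) | x :: nat \<Rightarrow> real. True}"
    then obtain t :: real where y: "y = max ((t + 1)^2) ((t - 1)^2)" by auto
    have "(t+1)^2 + (t-1)^2 \<ge> 2" by (simp add: power2_eq_square algebra_simps)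
    then show "1 \<le> y" unfolding y by linarith
  qed
  then show ?thesis by (simp add: meb_def)
qed

lemma must_read:
  assumes qa: "query_algorithm W out qry" and lv: "las_vegas_one_sided W out f"
    and n: "n \<ge> 2" and fo: "f (n, 1, ones n) = a" and ff: "\<And>k. k < n \<Longrightarrow> f (n, 1, flp n k) = b"
    and ab: "\<bar>a - b\<bar> = 1" and w: "w \<in> space W"
  shows "card (qry w (n, 1, ones n)) = n"
proof -
  have vP: "valid_input (n, 1, ones n)" using n valid_ones by simp
  have sub: "qry w (n, 1, ones n) \<subseteq> {..<n} \<times> {..<1}"
    using qa vP w unfolding query_algorithm_def by blast
  have sup: "{..<n} \<times> {..<1} \<subseteq> qry w (n, 1, ones n)"
  proof
    fix p assume p: "p \<in> {..<n} \<times> {..<(1::nat)}"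
    then obtain k where pk: "p = (k, 0)" and k: "k < n" by auto
    show "p \<in> qry w (n, 1, ones n)"
    proof (rule ccontr)
      assume nq: "p \<notin> qry w (n, 1, ones n)"
      have vQ: "valid_input (n, 1, flp n k)" using n valid_flp by simp
      have agree: "\<forall>(i, j)\<in>qry w (n, 1, ones n). ones n i j = flp n k i j"
      proof (intro ballI, clarify)
        fix i j assume ij: "(i, j) \<in> qry w (n, 1, ones n)"
        then have "i < n" "j = 0" using sub by auto
        moreover have "i \<noteq> k" using ij nq pk \<open>j = 0\<close> by auto
        ultimately show "ones n i j = flp n k i j" by (simp add: ones_def flp_def)
      qed
      have eq: "out w (n, 1, flp n k) = out w (n, 1, ones n)"
        using qa vP vQ w agree unfolding query_algorithm_def by blast
      have fb: "f (n, 1, flp n k) = b" using ff k .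
      from lv show False unfolding las_vegas_one_sided_def
      proof
        assume h: "\<forall>w\<in>space W. \<forall>inp. valid_input inp \<longrightarrow> f inp - 1/2 \<le> out w inp \<and> out w inp \<le> f inp"
        have "a - 1/2 \<le> out w (n, 1, ones n) \<and> out w (n, 1, ones n) \<le> a" using h w vP fo by auto
        moreover have "b - 1/2 \<le> out w (n, 1, ones n) \<and> out w (n, 1, ones n) \<le> b" using h w vQ fb eq by metis
        ultimately show False using ab by linarith
      next
        assume h: "\<forall>w\<in>space W. \<forall>inp. valid_input inp \<longrightarrow> f inp \<le> out w inp \<and> out w inp \<le> f inp + 1/2"
        have "a \<le> out w (n, 1, ones n) \<and> out w (n, 1, ones n) \<le> a + 1/2" using h w vP fo by auto
        moreover have "b \<le> out w (n, 1, ones n) \<and> out w (n, 1, ones n) \<le> b + 1/2" using h w vQ fb eq by metis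
        ultimately show False using ab by linarith
      qed
    qed
  qed
  have "qry w (n, 1, ones n) = {..<n} \<times> {..<1}" using sub sup by blast
  then show ?thesis by simp
qed

lemma no_alg:
  assumes qa: "query_algorithm W out qry" and lv: "las_vegas_one_sided W out f"
    and sc: "sublinear_cost W qry"
    and fv: "\<And>n k. n \<ge> 2 \<Longrightarrow> k < n \<Longrightarrow> \<bar>f (n, 1, ones n) - f (n, 1, flp n k)\<bar> = 1"
    and fc: "\<And>n k k'. n \<ge> 2 \<Longrightarrow> k < n \<Longrightarrow> k' < n \<Longrightarrow> f (n, 1, flp n k) = f (n, 1, flp n k')"
  shows False
proof -
  obtain M0 where M0: "\<And>inp. valid_input inp \<Longrightarrow> nnz inp \<ge> M0 \<Longrightarrow>
        expected_cost W qry inp \<le> ennreal ((1/2) * real (nnz inp))"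
    using sc unfolding sublinear_cost_def by (meson half_gt_zero zero_less_one)
  define n where "n = max M0 2"
  have n: "n \<ge> 2" "n \<ge> M0" unfolding n_def by auto
  have ps: "prob_space W" using qa unfolding query_algorithm_def by blast
  have card: "card (qry w (n, 1, ones n)) = n" if w: "w \<in> space W" for w
  proof (rule must_read[OF qa lv n(1) refl _ _ w])
    show "f (n, 1, flp n k) = f (n, 1, flp n 0)" if "k < n" for k using fc[OF n(1) that] n by simp
    show "\<bar>f (n, 1, ones n) - f (n, 1, flp n 0)\<bar> = 1" using fv[OF n(1)] n by simp
  qed
  have "expected_cost W qry (n, 1, ones n) = (\<integral>\<^sup>+ w. ennreal (real n) \<partial>W)"
    unfolding expected_cost_def by (rule nn_integral_cong) (metis card)
  also have "\<dots> = ennreal (real n)"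
    using prob_space.emeasure_space_1[OF ps] by simp
  finally have ec: "expected_cost W qry (n, 1, ones n) = ennreal (real n)" .
  have "ennreal (real n) \<le> ennreal ((1/2) * real n)"
    using M0[of "(n, 1, ones n)"] valid_ones[of n] n ec nnz_ones[of n] by simp
  then have "real n \<le> (1/2) * real n" by (simp add: ennreal_le_iff)
  then show False using n by simp
qed

theorem mainTheorem19:
  shows "\<not> (\<exists>(W :: 'w measure) out qry. query_algorithm W out qry \<and>
             las_vegas_one_sided W out margin \<and> sublinear_cost W qry)
       \<and> \<not> (\<exists>(W :: 'w measure) out qry. query_algorithm W out qry \<and>
             las_vegas_one_sided W out meb \<and> sublinear_cost W qry)"
proof (intro conjI notI; elim exE conjE)
  fix W :: "'w measure" and out qry
  assume "query_algorithm W out qry" "las_vegas_one_sided W out margin" "sublinear_cost W qry"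
  then show False
    by (rule no_alg) (simp_all add: margin_ones margin_flp del: One_nat_def)
next
  fix W :: "'w measure" and out qry
  assume "query_algorithm W out qry" "las_vegas_one_sided W out meb" "sublinear_cost W qry"
  then show False
    by (rule no_alg) (simp_all add: meb_ones meb_flp del: One_nat_def)
qed

end
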